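(* Let $S$ be an inverse monoid and $(X,E(S),p)$ a (global) presheaf of geodesic metric spaces on which $S$ acts properly and coboundedly. Then $S$ is quasi-finitely generated, i.e. there is a finite subset $\mathcal M\subseteq S$ with $\mathcal M=\mathcal M^{-1}$ such that $S$ is generated as a semigroup by $\mathcal M\cup E(S)$.
   Context: An inverse monoid is a monoid $S$ (identity $1$) in which every $s$ has a unique $s^{-1}$ with $ss^{-1}s=s$, $s^{-1}ss^{-1}=s^{-1}$; $E(S)$ is its set of idempotents, a meet-semilattice with meet $ef$. Presheaf: a set $X$ with maps $p\colon X\to E(S)$ and $X\times E(S)\to X$ such that $(x\cdot e)\cdot f=x\cdot ef$, $x\cdot p(x)=x$, $p(x\cdot e)=p(x)e$; fibers $X_e=p^{-1}(e)$. A (global) presheaf of metric spaces additionally has $p$ surjective, each $X_e$ a metric space $d_e$, and $d_e(x,y)\ge d_{ef}(x\cdot f,y\cdot f)$ for $x,y\in X_e$; $d(x,y)=d_e(x,y)$ for $x,y\in X_e$ and $\infty$ across fibers. Geodesic: finite distances $D$ are realised by isometric embeddings of $[0,D]$. Action: a right action $X\times S\to X$ extending the presheaf map on $E(S)$, with $p(x\cdot s)=s^{-1}p(x)s$ and $d_e(x,y)\ge d_{s^{-1}es}(x\cdot s,y\cdot s)$ for $x,y\in X_e$. Proper: for every $y_1\in X_1$ and $R\ge0$ there is a finite $\mathcal C\subseteq S$ with $\{s: d(y_1\cdot s,y_1\cdot s^{-1}s)\le R\}\subseteq\{ce: c\in\mathcal C,e\in E(S)\}$. Cobounded: there are $x_1\in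 X_1$, $T\ge0$ such that every point of $X$ equals $y\cdot s$ for some $s\in S$ and $y$ with $d(x_1,y)\le T$. *)

theory Defs
  imports "HOL-Analysis.Analysis"
begin

text \<open>The inverse monoid S is the whole carrier of a type of class monoid_mult.\<close>

definition inverse_monoid :: "'s::monoid_mult itself \<Rightarrow> bool" where
  "inverse_monoid _ \<longleftrightarrow> (\<forall>s::'s. \<exists>!t. s * t * s = s \<and> t * s * t = t)"

definition inv_of :: "'s::monoid_mult \<Rightarrow> 's" where
  "inv_of s = (THE t. s * t * s = s \<and> t * s * t = t)"

definition idems :: "'s::monoid_mult set" where
  "idems = {e. e * e = e}"

definition fiber :: "'x set \<Rightarrow> ('x \<Rightarrow> 's) \<Rightarrow> 's \<Rightarrow> 'x set" where
  "fiber X p e = {x \<in> X. p x = e}"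

definition gdist :: "('x \<Rightarrow> 's) \<Rightarrow> ('s \<Rightarrow> 'x \<Rightarrow> 'x \<Rightarrow> real) \<Rightarrow> 'x \<Rightarrow> 'x \<Rightarrow> ereal" where
  "gdist p d x y = (if p x = p y then ereal (d (p x) x y) else \<infinity>)"

text \<open>A (global) presheaf of metric spaces (X, E(S), p); the restriction map x \<cdot> e is
  the restriction of the map act to idempotents e; d e is the metric on the fibre X_e.\<close>
definition presheaf_ms ::
  "'x set \<Rightarrow> ('x \<Rightarrow> 's::monoid_mult) \<Rightarrow> ('x \<Rightarrow> 's \<Rightarrow> 'x) \<Rightarrow> ('s \<Rightarrow> 'x \<Rightarrow> 'x \<Rightarrow> real) \<Rightarrow> bool" where
  "presheaf_ms X p act d \<longleftrightarrow>
     p ` X = idems \<and>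
     (\<forall>x\<in>X. \<forall>e\<in>idems. act x e \<in> X) \<and>
     (\<forall>x\<in>X. \<forall>e\<in>idems. \<forall>f\<in>idems. act (act x e) f = act x (e * f)) \<and>
     (\<forall>x\<in>X. act x (p x) = x) \<and>
     (\<forall>x\<in>X. \<forall>e\<in>idems. p (act x e) = p x * e) \<and>
     (\<forall>e\<in>idems. Metric_space (fiber X p e) (d e)) \<and>
     (\<forall>e\<in>idems. \<forall>f\<in>idems. \<forall>x\<in>fiber X p e. \<forall>y\<in>fiber X p e.
         d (e * f) (act x f) (act y f) \<le> d e x y)"

text \<open>Each fibre is geodesic: distances are realised by isometric embeddings of [0,D].
  (All finite distances lie within a fibre.)\<close>
definition geodesic_presheaf ::
  "'x set \<Rightarrow> ('x \<Rightarrow> 's) \<Rightarrow> ('s \<Rightarrow> 'x \<Rightarrow> 'x \<Rightarrow> real) \<Rightarrow> bool" where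
  "geodesic_presheaf X p d \<longleftrightarrow>
     (\<forall>x\<in>X. \<forall>y\<in>X. p x = p y \<longrightarrow>
        (\<exists>\<gamma>::real \<Rightarrow> 'x. \<gamma> 0 = x \<and> \<gamma> (d (p x) x y) = y \<and>
           (\<forall>t\<in>{0..d (p x) x y}. \<gamma> t \<in> X) \<and>
           (\<forall>s\<in>{0..d (p x) x y}. \<forall>t\<in>{0..d (p x) x y}.
               gdist p d (\<gamma> s) (\<gamma> t) = ereal \<bar>s - t\<bar>)))"

definition action_ms ::
  "'x set \<Rightarrow> ('x \<Rightarrow> 's::monoid_mult) \<Rightarrow> ('x \<Rightarrow> 's \<Rightarrow> 'x) \<Rightarrow> ('s \<Rightarrow> 'x \<Rightarrow> 'x \<Rightarrow> real) \<Rightarrow> bool" where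
  "action_ms X p act d \<longleftrightarrow>
     (\<forall>x\<in>X. \<forall>s. act x s \<in> X) \<and>
     (\<forall>x\<in>X. \<forall>s t. act (act x s) t = act x (s * t)) \<and>
     (\<forall>x\<in>X. \<forall>s. p (act x s) = inv_of s * p x * s) \<and>
     (\<forall>e\<in>idems. \<forall>s. \<forall>x\<in>fiber X p e. \<forall>y\<in>fiber X p e.
         d (inv_of s * e * s) (act x s) (act y s) \<le> d e x y)"

definition proper_action ::
  "'x set \<Rightarrow> ('x \<Rightarrow> 's::monoid_mult) \<Rightarrow> ('x \<Rightarrow> 's \<Rightarrow> 'x) \<Rightarrow> ('s \<Rightarrow> 'x \<Rightarrow> 'x \<Rightarrow> real) \<Rightarrow> bool" where
  "proper_action X p act d \<longleftrightarrow>
     (\<forall>y1\<in>fiber X p 1. \<forall>R::real. R \<ge> 0 \<longrightarrow>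
        (\<exists>C. finite C \<and>
           {s. gdist p d (act y1 s) (act y1 (inv_of s * s)) \<le> ereal R}
             \<subseteq> {c * e | c e. c \<in> C \<and> e \<in> idems}))"

definition cobounded_action ::
  "'x set \<Rightarrow> ('x \<Rightarrow> 's::monoid_mult) \<Rightarrow> ('x \<Rightarrow> 's \<Rightarrow> 'x) \<Rightarrow> ('s \<Rightarrow> 'x \<Rightarrow> 'x \<Rightarrow> real) \<Rightarrow> bool" where
  "cobounded_action X p act d \<longleftrightarrow>
     (\<exists>x1\<in>fiber X p 1. \<exists>T::real. T \<ge> 0 \<and>
        (\<forall>x\<in>X. \<exists>s y. y \<in> X \<and> gdist p d x1 y \<le> ereal T \<and> x = act y s))"

inductive_set sgr_gen :: "'s::monoid_mult set \<Rightarrow> 's set" for A where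
  gen: "a \<in> A \<Longrightarrow> a \<in> sgr_gen A"
| mult: "a \<in> sgr_gen A \<Longrightarrow> b \<in> sgr_gen A \<Longrightarrow> a * b \<in> sgr_gen A"

definition quasi_finitely_generated :: "'s::monoid_mult itself \<Rightarrow> bool" where
  "quasi_finitely_generated _ \<longleftrightarrow>
     (\<exists>M::'s set. finite M \<and> inv_of ` M = M \<and> sgr_gen (M \<union> idems) = UNIV)"

end

theory Submission imports Defs begin
lemma im_inv:
  assumes "inverse_monoid TYPE('s::monoid_mult)"
  shows "(s::'s) * inv_of s * s = s \<and> inv_of s * s * inv_of s = inv_of s"
proof -
  have "\<exists>!t. s * t * s = s \<and> t * s * t = t" using assms unfolding inverse_monoid_def by blast
  then show ?thesis unfolding inv_of_def by (rule theI')
qed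

lemma im_uniq:
  assumes "inverse_monoid TYPE('s::monoid_mult)" "(s::'s) * t * s = s" "t * s * t = t"
  shows "inv_of s = t"
proof -
  have "\<exists>!t. s * t * s = s \<and> t * s * t = t" using assms unfolding inverse_monoid_def by blast
  then show ?thesis unfolding inv_of_def using assms(2,3) by (intro the1_equality) auto
qed

lemma im_inv_inv:
  assumes "inverse_monoid TYPE('s::monoid_mult)"
  shows "inv_of (inv_of (s::'s)) = s"
  using im_inv[OF assms, of s] by (intro im_uniq[OF assms]) auto

lemma im_idem_inv:
  assumes "inverse_monoid TYPE('s::monoid_mult)" "(e::'s) * e = e"
  shows "inv_of e = e"
  using assms by (intro im_uniq[OF assms(1)]) auto

lemma im_idem_mult:
  assumes im: "inverse_monoid TYPE('s::monoid_mult)" and e: "(e::'s) * e = e" and f: "f * f = f"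
  shows "(e * f) * (e * f) = e * f"
proof -
  define x where "x = inv_of (e * f)"
  have x1: "e * f * x * (e * f) = e * f" and x2: "x * (e * f) * x = x"
    using im_inv[OF im, of "e*f"] unfolding x_def by (auto simp: mult.assoc)
  have "e * f * (f * x * e) * (e * f) = e * f * x * (e * f)"
    by (simp add: mult.assoc e f flip: mult.assoc[of f f] mult.assoc[of e e])
  also have "\<dots> = e * f" by (rule x1)
  finally have a: "e * f * (f * x * e) * (e * f) = e * f" .
  have "f * x * e * (e * f) * (f * x * e) = f * (x * (e * f) * x) * e"
    by (simp add: mult.assoc e f flip: mult.assoc[of f f] mult.assoc[of e e])
  also have "\<dots> = f * x * e" using x2 by (simp add: mult.assoc)
  finally have b: "f * x * e * (e * f) * (f * x * e) = f * x * e" .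
  have fxe: "f * x * e = x" using im_uniq[OF im a b] x_def by simp
  have xx: "x * x = x"
  proof -
    have "x * x = f * x * e * (f * x * e)" using fxe by simp
    also have "\<dots> = f * (x * (e * f) * x) * e" by (simp add: mult.assoc)
    also have "\<dots> = x" using x2 fxe by (simp add: mult.assoc)
    finally show ?thesis .
  qed
  have "inv_of x = x" by (rule im_idem_inv[OF im xx])
  moreover have "inv_of x = e * f" using x1 x2 by (intro im_uniq[OF im]) (auto simp: mult.assoc)
  ultimately have "e * f = x" by simp
  then show ?thesis using xx by simp
qed

lemma im_idem_comm:
  assumes im: "inverse_monoid TYPE('s::monoid_mult)" and e: "(e::'s) * e = e" and f: "f * f = f"
  shows "e * f = f * e"
proof -
  have ef: "(e * f) * (e * f) = e * f" and fe: "(f * e) * (f * e) = f * e"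
    using im_idem_mult[OF im e f] im_idem_mult[OF im f e] by auto
  have a: "(e*f) * (f*e) * (e*f) = e * f"
  proof -
    have "(e*f) * (f*e) * (e*f) = e * (f * f) * (e * e) * f" by (simp add: mult.assoc)
    also have "\<dots> = (e * f) * (e * f)" using e f by (simp add: mult.assoc)
    finally show ?thesis using ef by simp
  qed
  have b: "(f*e) * (e*f) * (f*e) = f * e"
  proof -
    have "(f*e) * (e*f) * (f*e) = f * (e * e) * (f * f) * e" by (simp add: mult.assoc)
    also have "\<dots> = (f * e) * (f * e)" using e f by (simp add: mult.assoc)
    finally show ?thesis using fe by simp
  qed
  have "inv_of (e*f) = f * e" by (rule im_uniq[OF im a b])
  moreover have "inv_of (e*f) = e * f" by (rule im_idem_inv[OF im ef])
  ultimately show ?thesis by simp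
qed

lemma im_idem1:
  assumes im: "inverse_monoid TYPE('s::monoid_mult)"
  shows "inv_of (s::'s) * s * (inv_of s * s) = inv_of s * s"
    and "s * inv_of s * (s * inv_of s) = s * inv_of s"
  using im_inv[OF im, of s] by (simp_all add: mult.assoc[symmetric])

lemma im_inv_mult:
  assumes im: "inverse_monoid TYPE('s::monoid_mult)"
  shows "inv_of ((a::'s) * b) = inv_of b * inv_of a"
proof -
  have c: "(b * inv_of b) * (inv_of a * a) = (inv_of a * a) * (b * inv_of b)"
    using im_idem_comm[OF im] im_idem1[OF im] by blast
  have ia: "a * inv_of a * a = a" "inv_of a * a * inv_of a = inv_of a" using im_inv[OF im, of a] by auto
  have ib: "b * inv_of b * b = b" "inv_of b * b * inv_of b = inv_of b" using im_inv[OF im, of b] by auto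
  have 1: "a * b * (inv_of b * inv_of a) * (a * b) = a * b"
  proof -
    have "a * b * (inv_of b * inv_of a) * (a * b) = a * ((b * inv_of b) * (inv_of a * a)) * b"
      by (simp add: mult.assoc)
    also have "\<dots> = a * ((inv_of a * a) * (b * inv_of b)) * b" by (simp only: c)
    also have "\<dots> = (a * inv_of a * a) * (b * inv_of b * b)" by (simp add: mult.assoc)
    finally show ?thesis using ia ib by simp
  qed
  have 2: "inv_of b * inv_of a * (a * b) * (inv_of b * inv_of a) = inv_of b * inv_of a"
  proof -
    have "inv_of b * inv_of a * (a * b) * (inv_of b * inv_of a) = inv_of b * ((inv_of a * a) * (b * inv_of b)) * inv_of a"
      by (simp add: mult.assoc)
    also have "\<dots> = inv_of b * ((b * inv_of b) * (inv_of a * a)) * inv_of a" by (simp only: c)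
    also have "\<dots> = (inv_of b * b * inv_of b) * (inv_of a * a * inv_of a)" by (simp add: mult.assoc)
    finally show ?thesis using ia ib by simp
  qed
  show ?thesis by (rule im_uniq[OF im 1 2])
qed

lemma step_lemma:
  fixes X :: "'x set" and p :: "'x \<Rightarrow> 's::monoid_mult"
    and act :: "'x \<Rightarrow> 's \<Rightarrow> 'x" and d :: "'s \<Rightarrow> 'x \<Rightarrow> 'x \<Rightarrow> real"
  assumes im: "inverse_monoid TYPE('s)"
    and ps: "presheaf_ms X p act d"
    and ac: "action_ms X p act d"
    and x1: "x1 \<in> fiber X p 1"
    and CC: "{s. gdist p d (act x1 s) (act x1 (inv_of s * s)) \<le> ereal (2*T+1)}
             \<subseteq> {c * e | c e. c \<in> C \<and> e \<in> idems}"
    and CM: "C \<subseteq> M"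
    and w: "w \<in> X" and z: "z \<in> X" and pwz: "p w = p z" and dwz: "d (p w) w z \<le> 1"
    and y: "y \<in> fiber X p 1" and y': "y' \<in> fiber X p 1"
    and dy: "d 1 x1 y \<le> T" and dy': "d 1 x1 y' \<le> T"
    and wt: "w = act y t" and zt: "z = act y' t'"
    and tG: "t \<in> sgr_gen (M \<union> idems)"
  shows "t' \<in> sgr_gen (M \<union> idems)"
proof -
  have actX: "\<And>x s. x \<in> X \<Longrightarrow> act x s \<in> X" and actc: "\<And>x s u. x \<in> X \<Longrightarrow> act (act x s) u = act x (s * u)"
    and actp: "\<And>x s. x \<in> X \<Longrightarrow> p (act x s) = inv_of s * p x * s"
    and actd: "\<And>e s x y. e \<in> idems \<Longrightarrow> x \<in> fiber X p e \<Longrightarrow> y \<in> fiber X p e \<Longrightarrow>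
         d (inv_of s * e * s) (act x s) (act y s) \<le> d e x y"
    using ac unfolding action_ms_def by blast+
  have met: "\<And>e. e \<in> idems \<Longrightarrow> Metric_space (fiber X p e) (d e)"
    using ps unfolding presheaf_ms_def by blast
  have X1: "x1 \<in> X" "p x1 = 1" "y \<in> X" "p y = 1" "y' \<in> X" "p y' = 1"
    using x1 y y' unfolding fiber_def by auto
  have one: "(1::'s) \<in> idems" unfolding idems_def by simp
  have it: "t * inv_of t * t = t" "inv_of t * t * inv_of t = inv_of t" using im_inv[OF im, of t] by auto
  have it': "t' * inv_of t' * t' = t'" using im_inv[OF im, of t'] by auto
  have pw: "p w = inv_of t * t" using actp[OF X1(3)] wt X1 by simp
  have pz: "p z = inv_of t' * t'" using actp[OF X1(5)] zt X1 by simp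
  have ff: "inv_of t' * t' = inv_of t * t" using pw pz pwz by simp
  define g where "g = t' * inv_of t"
  define e0 where "e0 = t * inv_of t"
  have e0i: "e0 \<in> idems" unfolding e0_def idems_def using im_idem1[OF im, of t] by simp
  have e0inv: "inv_of e0 = e0" using e0i im_idem_inv[OF im] unfolding idems_def by blast
  have gg: "inv_of g * g = e0"
  proof -
    have "inv_of g * g = t * inv_of t' * (t' * inv_of t)"
      unfolding g_def im_inv_mult[OF im] im_inv_inv[OF im] by simp
    also have "\<dots> = t * (inv_of t' * t') * inv_of t" by (simp add: mult.assoc)
    also have "\<dots> = t * inv_of t * t * inv_of t" by (simp add: ff mult.assoc)
    also have "\<dots> = e0" using it by (simp add: e0_def)
    finally show ?thesis .
  qed
  have t'g: "t' = g * t"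
  proof -
    have "g * t = t' * (inv_of t * t)" by (simp add: g_def mult.assoc)
    also have "\<dots> = t'" using it' by (simp add: ff[symmetric] mult.assoc)
    finally show ?thesis by simp
  qed
  have pe: "\<And>x s. x \<in> X \<Longrightarrow> p x = 1 \<Longrightarrow> p (act x s) = inv_of s * s"
    using actp by simp
  define a1 where "a1 = act x1 g"
  define a2 where "a2 = act y' g"
  define a3 where "a3 = act y e0"
  define a4 where "a4 = act x1 e0"
  have a2z: "a2 = act z (inv_of t)" unfolding a2_def zt g_def using actc[OF X1(5)] by simp
  have a3w: "a3 = act w (inv_of t)" unfolding a3_def wt e0_def using actc[OF X1(3)] by simp
  have F: "a1 \<in> fiber X p e0" "a2 \<in> fiber X p e0" "a3 \<in> fiber X p e0" "a4 \<in> fiber X p e0"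
    unfolding fiber_def a1_def a2_def a3_def a4_def
    using pe[OF X1(1,2)] pe[OF X1(3,4)] pe[OF X1(5,6)] actX X1 gg e0inv e0i
    by (auto simp: idems_def)
  have fw: "w \<in> fiber X p (p w)" "z \<in> fiber X p (p w)" using w z pwz by (auto simp: fiber_def)
  have pwi: "p w \<in> idems" unfolding pw idems_def using im_idem1[OF im, of t] by simp
  have invpw: "inv_of (inv_of t) * p w * inv_of t = e0"
    unfolding im_inv_inv[OF im] pw e0_def using it by (simp add: mult.assoc)
  interpret M0: Metric_space "fiber X p e0" "d e0" using met[OF e0i] .
  interpret M1: Metric_space "fiber X p 1" "d 1" using met[OF one] .
  interpret Mw: Metric_space "fiber X p (p w)" "d (p w)" using met[OF pwi] .
  have d12: "d e0 a1 a2 \<le> T"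
    using actd[OF one x1 y', of g] dy' gg unfolding a1_def a2_def by simp
  have d23: "d e0 a2 a3 \<le> 1"
    using actd[OF pwi fw(2) fw(1), of "inv_of t"] invpw Mw.commute[of w z] dwz
    unfolding a2z a3w by simp
  have d34: "d e0 a3 a4 \<le> T"
    using actd[OF one y x1, of e0] dy e0inv M1.commute[of y x1] e0i[unfolded idems_def] unfolding a3_def a4_def by simp
  have "d e0 a1 a4 \<le> d e0 a1 a2 + d e0 a2 a3 + d e0 a3 a4"
    using M0.triangle[OF F(1,2,4)] M0.triangle[OF F(2,3,4)] by linarith
  then have "d e0 a1 a4 \<le> 2*T+1" using d12 d23 d34 by linarith
  moreover have "gdist p d a1 a4 = ereal (d e0 a1 a4)"
    using F unfolding gdist_def fiber_def by auto
  ultimately have "g \<in> {s. gdist p d (act x1 s) (act x1 (inv_of s * s)) \<le> ereal (2*T+1)}"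
    unfolding a1_def a4_def using gg by simp
  with CC obtain c e where ce: "g = c * e" "c \<in> C" "e \<in> idems" by blast
  have "c \<in> sgr_gen (M \<union> idems)" "e \<in> sgr_gen (M \<union> idems)" using ce CM by (auto intro: sgr_gen.gen)
  then have "c * e * t \<in> sgr_gen (M \<union> idems)" using tG by (auto intro: sgr_gen.mult)
  then show ?thesis using t'g ce by simp
qed

theorem corollary3p7:
  fixes X :: "'x set" and p :: "'x \<Rightarrow> 's::monoid_mult"
    and act :: "'x \<Rightarrow> 's \<Rightarrow> 'x" and d :: "'s \<Rightarrow> 'x \<Rightarrow> 'x \<Rightarrow> real"
  assumes "inverse_monoid TYPE('s)"
    and "presheaf_ms X p act d"
    and "geodesic_presheaf X p d"
    and "action_ms X p act d"
    and "proper_action X p act d"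
    and "cobounded_action X p act d"
  shows "quasi_finitely_generated TYPE('s)"
proof -
  note im = assms(1) and ps = assms(2) and geo = assms(3) and ac = assms(4)
  obtain x1 T where x1: "x1 \<in> fiber X p 1" and T: "T \<ge> 0"
    and cob: "\<And>x. x \<in> X \<Longrightarrow> \<exists>s y. y \<in> X \<and> gdist p d x1 y \<le> ereal T \<and> x = act y s"
    using assms(6) unfolding cobounded_action_def by blast
  obtain C where Cf: "finite C" and CC: "{s. gdist p d (act x1 s) (act x1 (inv_of s * s)) \<le> ereal (2*T+1)}
             \<subseteq> {c * e | c e. c \<in> C \<and> e \<in> idems}"
  proof -
    have "2*T+1 \<ge> 0" using T by simp
    then show ?thesis using that assms(5) x1 unfolding proper_action_def by blast
  qed
  define M where "M = C \<union> inv_of ` C"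
  have CM: "C \<subseteq> M" unfolding M_def by blast
  have Mf: "finite M" using Cf unfolding M_def by simp
  have Minv: "inv_of ` M = M" unfolding M_def image_Un image_image im_inv_inv[OF im] by auto
  have X1: "x1 \<in> X" "p x1 = 1" using x1 unfolding fiber_def by auto
  have actX: "\<And>x s. x \<in> X \<Longrightarrow> act x s \<in> X"
    and actp: "\<And>x s. x \<in> X \<Longrightarrow> p (act x s) = inv_of s * p x * s"
    using ac unfolding action_ms_def by blast+
  have met: "\<And>e. e \<in> idems \<Longrightarrow> Metric_space (fiber X p e) (d e)"
    using ps unfolding presheaf_ms_def by blast
  have one: "(1::'s) \<in> idems" unfolding idems_def by simp
  have d11: "d 1 x1 x1 = 0" using Metric_space.zero[OF met[OF one] x1 x1] by simp
  have rep: "\<exists>s y. y \<in> fiber X p 1 \<and> d 1 x1 y \<le> T \<and> x = act y s" if xX: "x \<in> X" for x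
  proof -
    obtain s y where "y \<in> X" "gdist p d x1 y \<le> ereal T" "x = act y s" using cob[OF xX] by blast
    then show ?thesis using X1 unfolding gdist_def fiber_def by (auto split: if_splits)
  qed
  let ?G = "sgr_gen (M \<union> idems)"
  have "s \<in> ?G" for s
  proof -
    define f where "f = inv_of s * s"
    have fi: "f \<in> idems" unfolding f_def idems_def using im_idem1[OF im, of s] by simp
    have finv: "inv_of f = f" using fi im_idem_inv[OF im] unfolding idems_def by blast
    have fG: "f \<in> ?G" using fi by (auto intro: sgr_gen.gen)
    define x0 where "x0 = act x1 f"
    have x0: "x0 \<in> X" "p x0 = f" unfolding x0_def using actX[OF X1(1)] actp[OF X1(1)] X1 finv fi
      by (auto simp: idems_def)
    have direct: "t \<in> ?G" if "z \<in> X" "p z = f" "d f x0 z \<le> 1" "y \<in> fiber X p 1" "d 1 x1 y \<le> T"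
      "z = act y t" for z y t
      by (rule step_lemma[OF im ps ac x1 CC CM x0(1) that(1) _ _ x1 that(4) _ that(5) x0_def that(6) fG])
        (use that x0 d11 T in simp_all)
    have claim: "\<forall>z y t. z \<in> X \<longrightarrow> p z = f \<longrightarrow> d f x0 z \<le> real n \<longrightarrow> y \<in> fiber X p 1 \<longrightarrow>
       d 1 x1 y \<le> T \<longrightarrow> z = act y t \<longrightarrow> t \<in> ?G" for n :: nat
    proof (induction n)
      case 0
      then show ?case using direct by (metis of_nat_0 of_nat_0_le_iff order_trans zero_le_one)
    next
      case (Suc n)
      show ?case
      proof (intro allI impI)
        fix z y t
        assume z: "z \<in> X" "p z = f" "d f x0 z \<le> real (Suc n)" "y \<in> fiber X p 1" "d 1 x1 y \<le> T" "z = act y t"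
        show "t \<in> ?G"
        proof (cases "d f x0 z \<le> 1")
          case True
          then show ?thesis using direct z by blast
        next
          case False
          define D where "D = d f x0 z"
          have ex: "\<exists>\<gamma>::real \<Rightarrow> 'x. \<gamma> 0 = x0 \<and> \<gamma> D = z \<and> (\<forall>t\<in>{0..D}. \<gamma> t \<in> X) \<and>
             (\<forall>a\<in>{0..D}. \<forall>b\<in>{0..D}. gdist p d (\<gamma> a) (\<gamma> b) = ereal \<bar>a - b\<bar>)"
            using geo[unfolded geodesic_presheaf_def, rule_format, OF x0(1) z(1)] x0(2) z(2)
            unfolding D_def by simp
          then obtain \<gamma> where g0: "\<gamma> 0 = x0" and gD: "\<gamma> D = z" and gX: "\<forall>t\<in>{0..D}. \<gamma> t \<in> X"
            and gd: "\<forall>a\<in>{0..D}. \<forall>b\<in>{0..D}. gdist p d (\<gamma> a) (\<gamma> b) = ereal \<bar>a - b\<bar>"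
            by blast
          define w where "w = \<gamma> (D - 1)"
          have D1: "D > 1" using False D_def by simp
          have wX: "w \<in> X" using gX D1 unfolding w_def by auto
          have m0: "0 \<in> {0..D}" "D - 1 \<in> {0..D}" "D \<in> {0..D}" using D1 by auto
          have "gdist p d (\<gamma> 0) (\<gamma> (D - 1)) = ereal \<bar>0 - (D - 1)\<bar>"
            using gd m0(1,2) by blast
          then have e1: "gdist p d x0 w = ereal (D - 1)" using D1 g0 unfolding w_def by simp
          have "gdist p d (\<gamma> (D - 1)) (\<gamma> D) = ereal \<bar>(D - 1) - D\<bar>"
            using gd m0(2,3) by blast
          then have e2: "gdist p d w z = ereal 1" using gD unfolding w_def by simp
          have pw: "p w = f" and dw: "d f x0 w = D - 1" using e1 x0 unfolding gdist_def
            by (auto split: if_splits)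
          have dwz: "d f w z = 1" using e2 pw unfolding gdist_def by (auto split: if_splits)
          obtain t0 y0 where y0: "y0 \<in> fiber X p 1" "d 1 x1 y0 \<le> T" "w = act y0 t0" using rep[OF wX] by blast
          have "d f x0 w \<le> real n" using dw z(3) unfolding D_def by simp
          then have t0G: "t0 \<in> ?G" using Suc.IH[rule_format, OF wX pw _ y0(1) y0(2) y0(3)] by blast
          show ?thesis
            by (rule step_lemma[OF im ps ac x1 CC CM wX z(1) _ _ y0(1) z(4) y0(2) z(5) y0(3) z(6) t0G])
              (use pw z dwz in simp_all)
        qed
      qed
    qed
    define z where "z = act x1 s"
    have z: "z \<in> X" "p z = f" unfolding z_def f_def using actX[OF X1(1)] actp[OF X1(1)] X1 by auto
    have "d f x0 z \<le> real (nat \<lceil>d f x0 z\<rceil>)" by linarith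
    then show ?thesis using claim[of "nat \<lceil>d f x0 z\<rceil>", rule_format, OF z(1) z(2) _ x1 _ z_def] d11 T by simp
  qed
  then show ?thesis unfolding quasi_finitely_generated_def using Mf Minv by blast
qed

end
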